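(* Let $(X,d)$ be a compact metric space and $f:X\to X$ continuous such that $f|_{CR(f)}$ has the shadowing property. Let $(x,y)\in CR(f)^2$ with $x\ne y$ and $x\sim y$. Then for every $0<\epsilon<\frac12 d(x,y)$ there is an integer $a>0$ such that $h(f,\{X\setminus \overline{B}... \})$; precisely, $h(f,\{X\setminus B_\epsilon(x), X\setminus B_\epsilon(y)\})\ge a^{-1}\log 2>0$, and consequently $(x,y)\in E(X,f)$.
   Context: $B_\epsilon(p)$ is the open $\epsilon$-ball about $p$ (so $\{X\setminus B_\epsilon(x),X\setminus B_\epsilon(y)\}$ is a closed cover; entropy relative to it is defined as for open covers via $\lim_n\frac1n\log$ of the minimal cardinality of subcovers of the joins $\bigvee_{i=0}^{n-1}f^{-i}\mathcal U$). A $\delta$-chain of $f$ is a finite sequence $(x_i)_{i=0}^k$, $k\ge1$, with $d(f(x_i),x_{i+1})\le\delta$; a $\delta$-cycle is a $\delta$-chain with $x_0=x_k$. $CR(f)$ is the set of points $x$ such that for every $\delta>0$ there is a $\delta$-cycle starting and ending at $x$. For $x,y\in CR(f)$, $x\sim y$ iff for every $\delta>0$ there are integers $m>0$, $N>0$ such that for every $n\ge N$ there are $\delta$-chains $(x_i)_{i=0}^{mn},(y_i)_{i=0}^{mn}$ in $CR(f)$ with $x_0=y_{mn}=x$, $x_{mn}=y_0=y$. Shadowing property of $g:Y\to Y$: for every $\epsilon>0$ there is $\delta>0$ such that every $\delta$-pseudo orbit $(y_i)_{i\ge 0}$ ($d(g(y_i),y_{i+1})\le\delta$) is $\epsilon$-shadowed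 by some $y\in Y$ ($d(g^i(y),y_i)\le\epsilon$ for all $i$). An entropy pair is $(x,y)$, $x\ne y$, such that for all disjoint closed neighborhoods $A\ni x$, $B\ni y$, $h(f,\{X\setminus A,X\setminus B\})>0$; $E(X,f)$ is the set of entropy pairs. *)

theory Defs
  imports "HOL-Analysis.Analysis"
begin

definition is_chain :: "('a::metric_space \<Rightarrow> 'a) \<Rightarrow> 'a set \<Rightarrow> real \<Rightarrow> nat \<Rightarrow> (nat \<Rightarrow> 'a) \<Rightarrow> bool" where
  "is_chain f S \<delta> k c \<longleftrightarrow> k \<ge> 1 \<and> (\<forall>i\<le>k. c i \<in> S) \<and>
     (\<forall>i<k. dist (f (c i)) (c (Suc i)) \<le> \<delta>)"

definition chain_recurrent_set :: "('a::metric_space \<Rightarrow> 'a) \<Rightarrow> 'a set \<Rightarrow> 'a set" where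
  "chain_recurrent_set f X = {x \<in> X. \<forall>\<delta>>0. \<exists>k c. is_chain f X \<delta> k c \<and> c 0 = x \<and> c k = x}"

definition chain_equiv :: "('a::metric_space \<Rightarrow> 'a) \<Rightarrow> 'a set \<Rightarrow> 'a \<Rightarrow> 'a \<Rightarrow> bool" where
  "chain_equiv f X x y \<longleftrightarrow> x \<in> chain_recurrent_set f X \<and> y \<in> chain_recurrent_set f X \<and>
     (\<forall>\<delta>>0. \<exists>m::nat. m > 0 \<and> (\<exists>N::nat. N > 0 \<and> (\<forall>n\<ge>N.
        (\<exists>c. is_chain f (chain_recurrent_set f X) \<delta> (m * n) c \<and> c 0 = x \<and> c (m * n) = y) \<and>
        (\<exists>c. is_chain f (chain_recurrent_set f X) \<delta> (m * n) c \<and> c 0 = y \<and> c (m * n) = x))))"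

definition has_shadowing :: "('a::metric_space \<Rightarrow> 'a) \<Rightarrow> 'a set \<Rightarrow> bool" where
  "has_shadowing g Y \<longleftrightarrow> (\<forall>\<epsilon>>0. \<exists>\<delta>>0. \<forall>ys :: nat \<Rightarrow> 'a.
     (\<forall>i. ys i \<in> Y) \<and> (\<forall>i. dist (g (ys i)) (ys (Suc i)) \<le> \<delta>) \<longrightarrow>
     (\<exists>y\<in>Y. \<forall>i. dist ((g ^^ i) y) (ys i) \<le> \<epsilon>))"

definition preim :: "('a \<Rightarrow> 'a) \<Rightarrow> 'a set \<Rightarrow> nat \<Rightarrow> 'a set \<Rightarrow> 'a set" where
  "preim f X i A = {z \<in> X. (f ^^ i) z \<in> A}"

definition join_cover :: "('a \<Rightarrow> 'a) \<Rightarrow> 'a set \<Rightarrow> 'a set set \<Rightarrow> nat \<Rightarrow> 'a set set" where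
  "join_cover f X U n = {X \<inter> (\<Inter>i<n. preim f X i (s i)) | s. \<forall>i<n. s i \<in> U}"

definition cover_num :: "'a set \<Rightarrow> 'a set set \<Rightarrow> nat" where
  "cover_num X V = (LEAST k. \<exists>W. W \<subseteq> V \<and> finite W \<and> card W = k \<and> X \<subseteq> \<Union>W)"

definition cover_entropy :: "('a \<Rightarrow> 'a) \<Rightarrow> 'a set \<Rightarrow> 'a set set \<Rightarrow> real" where
  "cover_entropy f X U = lim (\<lambda>n. ln (real (cover_num X (join_cover f X U n))) / real n)"

definition entropy_pair :: "('a::metric_space \<Rightarrow> 'a) \<Rightarrow> 'a set \<Rightarrow> 'a \<Rightarrow> 'a \<Rightarrow> bool" where
  "entropy_pair f X x y \<longleftrightarrow> x \<in> X \<and> y \<in> X \<and> x \<noteq> y \<and>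
     (\<forall>A B. closed A \<and> closed B \<and> A \<subseteq> X \<and> B \<subseteq> X \<and> A \<inter> B = {} \<and>
        (\<exists>U. open U \<and> x \<in> U \<and> U \<inter> X \<subseteq> A) \<and> (\<exists>V. open V \<and> y \<in> V \<and> V \<inter> X \<subseteq> B)
        \<longrightarrow> cover_entropy f X {X - A, X - B} > 0)"

end

theory Submission
  imports Defs
begin


lemma subadd_mult:
  fixes a :: "nat \<Rightarrow> real"
  assumes sub: "\<And>m n. a (m+n) \<le> a m + a n"
  shows "a (q*k + r) \<le> real q * a k + a r"
proof (induction q)
  case 0 then show ?case by simp
next
  case (Suc q)
  have "a (Suc q * k + r) = a (k + (q*k + r))" by (simp add: algebra_simps)
  also have "\<dots> \<le> a k + a (q*k+r)" by (rule sub)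
  also have "\<dots> \<le> a k + (real q * a k + a r)" using Suc by simp
  finally show ?case by (simp add: algebra_simps)
qed

lemma fekete:
  fixes a :: "nat \<Rightarrow> real"
  assumes sub: "\<And>m n. a (m+n) \<le> a m + a n" and nn: "\<And>n. a n \<ge> 0"
  shows "convergent (\<lambda>n. a n / real n)"
proof -
  define S where "S = (\<lambda>n. a n / real n) ` {1..}"
  define L where "L = Inf S"
  have bdd: "bdd_below S" unfolding S_def by (rule bdd_belowI[of _ 0]) (auto simp: nn)
  have ne: "S \<noteq> {}" unfolding S_def by auto
  have low: "L \<le> a n / real n" if "n \<ge> 1" for n
    unfolding L_def using bdd that by (auto simp: S_def intro!: cInf_lower)
  have "(\<lambda>n. a n / real n) \<longlonglongrightarrow> L"
  proof (rule LIMSEQ_I)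
    fix e :: real assume e: "0 < e"
    have "L < L + e/2" using e by simp
    then obtain s where "s \<in> S" "s < L + e/2" unfolding L_def using cInf_lessD[OF ne] by blast
    then obtain k where k: "k \<ge> 1" "a k / real k < L + e/2" unfolding S_def by auto
    define M where "M = (\<Sum>r<k. a r)"
    have Mr: "a r \<le> M" if "r < k" for r
      unfolding M_def using that by (intro member_le_sum) (auto simp: nn)
    have M0: "M \<ge> 0" unfolding M_def by (simp add: nn sum_nonneg)
    obtain N0 :: nat where N0: "N0 > 2*M/e" using reals_Archimedean2 by blast
    show "\<exists>no. \<forall>n\<ge>no. norm (a n / real n - L) < e"
    proof (intro exI[of _ "Suc N0"] allI impI)
      fix n assume n: "n \<ge> Suc N0"
      define q where "q = n div k"
      define r where "r = n mod k"
      have nqr: "n = q*k + r" unfolding q_def r_def by simp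
      have rk: "r < k" unfolding r_def using k by simp
      have npos: "real n > 0" using n by simp
      have "a n \<le> real q * a k + M" using subadd_mult[of a q k r, OF sub] Mr[OF rk] nqr by simp
      hence "a n / real n \<le> (real q * a k + M) / real n" using npos
        by (simp add: divide_right_mono)
      hence "a n / real n \<le> (real q * a k) / real n + M / real n"
        by (simp add: add_divide_distrib)
      moreover have "(real q * a k) / real n \<le> a k / real k"
      proof -
        have "real q * real k \<le> real n" using nqr by (metis le_add1 of_nat_le_iff of_nat_mult)
        hence "real q * a k * real k \<le> a k * real n" using nn[of k]
          by (metis mult.assoc mult.commute mult_left_mono)
        thus ?thesis using npos k by (simp add: divide_simps mult.commute)
      qed
      moreover have "M / real n < e/2"
      proof -
        have "real n > 2*M/e" using n N0 by linarith
        hence "2*M < real n * e" using e by (simp add: divide_simps mult.commute)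
        thus ?thesis using npos by (simp add: divide_simps mult.commute)
      qed
      ultimately have "a n / real n < L + e" using k by linarith
      moreover have "L \<le> a n / real n" using low n by simp
      ultimately show "norm (a n / real n - L) < e" by simp
    qed
  qed
  thus ?thesis by (rule convergentI)
qed


lemma funpow_in: "f ` X \<subseteq> X \<Longrightarrow> z \<in> X \<Longrightarrow> (f^^i) z \<in> X"
  by (induction i) auto

lemma join_elem: "X \<inter> (\<Inter>i<n. preim f X i (s i)) = {z\<in>X. \<forall>i<n. (f^^i) z \<in> s i}"
  by (auto simp: preim_def)

lemma join_cover_alt: "join_cover f X U n = {{z\<in>X. \<forall>i<n. (f^^i) z \<in> s i} | s. \<forall>i<n. s i \<in> U}"
  unfolding join_cover_def join_elem by simp

lemma join_finite:
  assumes "finite U" shows "finite (join_cover f X U n)"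
proof -
  have "join_cover f X U n \<subseteq> (\<lambda>s. {z\<in>X. \<forall>i<n. (f^^i) z \<in> s i}) ` (PiE {..<n} (\<lambda>_. U))"
  proof
    fix E assume "E \<in> join_cover f X U n"
    then obtain s where s: "\<forall>i<n. s i \<in> U" "E = {z\<in>X. \<forall>i<n. (f^^i) z \<in> s i}"
      unfolding join_cover_alt by blast
    have "restrict s {..<n} \<in> PiE {..<n} (\<lambda>_. U)" using s by auto
    moreover have "E = {z\<in>X. \<forall>i<n. (f^^i) z \<in> restrict s {..<n} i}" using s by auto
    ultimately show "E \<in> (\<lambda>s. {z\<in>X. \<forall>i<n. (f^^i) z \<in> s i}) ` (PiE {..<n} (\<lambda>_. U))" by blast
  qed
  moreover have "finite (PiE {..<n} (\<lambda>_. U))" using assms by (simp add: finite_PiE)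
  ultimately show ?thesis using finite_subset by blast
qed

lemma join_covers:
  assumes "f ` X \<subseteq> X" "X \<subseteq> P \<union> Q" shows "X \<subseteq> \<Union>(join_cover f X {P,Q} n)"
proof
  fix z assume z: "z \<in> X"
  define s where "s i = (if (f^^i) z \<in> P then P else Q)" for i
  have "\<forall>i<n. (f^^i) z \<in> s i"
  proof (intro allI impI)
    fix i have "(f^^i) z \<in> X" using funpow_in[OF assms(1) z] .
    then show "(f^^i) z \<in> s i" using assms(2) unfolding s_def by auto
  qed
  hence "z \<in> {z\<in>X. \<forall>i<n. (f^^i) z \<in> s i}" using z by blast
  moreover have "\<forall>i<n. s i \<in> {P,Q}" by (simp add: s_def)
  hence "{z\<in>X. \<forall>i<n. (f^^i) z \<in> s i} \<in> join_cover f X {P,Q} n"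
    unfolding join_cover_alt by blast
  ultimately show "z \<in> \<Union>(join_cover f X {P,Q} n)" by blast
qed

lemma cover_num_le: "W \<subseteq> V \<Longrightarrow> finite W \<Longrightarrow> X \<subseteq> \<Union>W \<Longrightarrow> cover_num X V \<le> card W"
  unfolding cover_num_def by (rule Least_le) blast

lemma cover_num_ex:
  assumes "finite V" "X \<subseteq> \<Union>V"
  shows "\<exists>W. W \<subseteq> V \<and> finite W \<and> card W = cover_num X V \<and> X \<subseteq> \<Union>W"
proof -
  have "\<exists>k W. W \<subseteq> V \<and> finite W \<and> card W = k \<and> X \<subseteq> \<Union>W" using assms by blast
  then show ?thesis unfolding cover_num_def by (rule LeastI_ex)
qed

lemma cover_num_pos:
  assumes "finite V" "X \<subseteq> \<Union>V" "X \<noteq> {}"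
  shows "cover_num X V \<ge> 1"
proof -
  obtain W where W: "W \<subseteq> V" "finite W" "card W = cover_num X V" "X \<subseteq> \<Union>W"
    using cover_num_ex[OF assms(1,2)] by blast
  have "W \<noteq> {}" using W(4) assms(3) by auto
  thus ?thesis using W by (metis One_nat_def Suc_leI card_gt_0_iff)
qed

lemma join_cover_memD:
  "E \<in> join_cover f X U n \<Longrightarrow> \<exists>s. (\<forall>i<n. s i \<in> U) \<and> E = {z\<in>X. \<forall>i<n. (f^^i) z \<in> s i}"
  unfolding join_cover_alt mem_Collect_eq by (elim exE conjE) (rule exI, rule conjI)

lemma join_cover_memI:
  "\<forall>i<n. s i \<in> U \<Longrightarrow> {z\<in>X. \<forall>i<n. (f^^i) z \<in> s i} \<in> join_cover f X U n"
  unfolding join_cover_alt mem_Collect_eq by (rule exI, rule conjI, rule refl)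



lemma all_less_add: "(\<forall>i<(n::nat)+m. Q i) \<longleftrightarrow> (\<forall>i<n. Q i) \<and> (\<forall>i<m. Q (i+n))"
proof
  assume "\<forall>i<n+m. Q i" thus "(\<forall>i<n. Q i) \<and> (\<forall>i<m. Q (i+n))" by auto
next
  assume H: "(\<forall>i<n. Q i) \<and> (\<forall>i<m. Q (i+n))"
  show "\<forall>i<n+m. Q i"
  proof (intro allI impI)
    fix i assume i: "i < n+m"
    show "Q i"
    proof (cases "i < n")
      case True then show ?thesis using H by simp
    next
      case False
      then have "i - n < m" "i - n + n = i" using i by auto
      then show ?thesis using H by metis
    qed
  qed
qed
lemma concat_elem:
  assumes fX: "f ` X \<subseteq> X"
  shows "{z \<in> {z\<in>X. \<forall>i<n. (f^^i) z \<in> s1 i}. (f^^n) z \<in> {z\<in>X. \<forall>i<m. (f^^i) z \<in> s2 i}}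
     = {z\<in>X. \<forall>i<n+m. (f^^i) z \<in> (if i<n then s1 i else s2 (i-n))}"
proof -
  have "(\<forall>i<n+m. (f^^i) z \<in> (if i<n then s1 i else s2 (i-n))) \<longleftrightarrow>
        (\<forall>i<n. (f^^i) z \<in> s1 i) \<and> (\<forall>i<m. (f^^i) ((f^^n) z) \<in> s2 i)" for z
    unfolding all_less_add by (simp add: funpow_add)
  moreover have "z \<in> X \<Longrightarrow> (f^^n) z \<in> X" for z using funpow_in[OF fX] .
  ultimately show ?thesis by blast
qed
lemma cover_num_submult:
  assumes fX: "f ` X \<subseteq> X" and cov: "X \<subseteq> P \<union> Q"
  shows "cover_num X (join_cover f X {P,Q} (n+m)) \<le>
         cover_num X (join_cover f X {P,Q} n) * cover_num X (join_cover f X {P,Q} m)"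
proof -
  let ?J = "join_cover f X {P,Q}"
  have fin: "finite (?J k)" for k by (rule join_finite) simp
  have cv: "X \<subseteq> \<Union>(?J k)" for k by (rule join_covers[OF fX cov])
  obtain W1 where W1: "W1 \<subseteq> ?J n" "finite W1" "card W1 = cover_num X (?J n)" "X \<subseteq> \<Union>W1"
    using cover_num_ex[OF fin cv] by meson
  obtain W2 where W2: "W2 \<subseteq> ?J m" "finite W2" "card W2 = cover_num X (?J m)" "X \<subseteq> \<Union>W2"
    using cover_num_ex[OF fin cv] by meson
  define C where "C = (\<lambda>(E1,E2). {z\<in>E1. (f^^n) z \<in> E2})"
  have CJ: "C (E1,E2) \<in> ?J (n+m)" if hE1: "E1 \<in> ?J n" and hE2: "E2 \<in> ?J m" for E1 E2
  proof -
    obtain s1 where s1: "\<forall>i<n. s1 i \<in> {P,Q}" "E1 = {z\<in>X. \<forall>i<n. (f^^i) z \<in> s1 i}"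
      using join_cover_memD[OF hE1] by (elim exE conjE) (rule that; assumption)
    obtain s2 where s2: "\<forall>i<m. s2 i \<in> {P,Q}" "E2 = {z\<in>X. \<forall>i<m. (f^^i) z \<in> s2 i}"
      using join_cover_memD[OF hE2] by (elim exE conjE) (rule that; assumption)
    define s where "s i = (if i < n then s1 i else s2 (i - n))" for i
    have "\<forall>i<n+m. s i \<in> {P,Q}" using s1 s2 unfolding s_def by auto
    moreover have "C (E1,E2) = {z\<in>X. \<forall>i<n+m. (f^^i) z \<in> s i}"
      unfolding C_def s1(2) s2(2) s_def using concat_elem[OF fX] by simp
    ultimately show ?thesis using join_cover_memI[of "n+m" s "{P,Q}" X f] by simp
  qed
  have "C ` (W1 \<times> W2) \<subseteq> ?J (n+m)"
  proof
    fix E assume "E \<in> C ` (W1 \<times> W2)"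
    then obtain E1 E2 where "E1 \<in> W1" "E2 \<in> W2" "E = C (E1,E2)" by auto
    then show "E \<in> ?J (n+m)" using CJ W1(1) W2(1) by auto
  qed
  moreover have "finite (C ` (W1 \<times> W2))" using W1(2) W2(2) by simp
  moreover have "X \<subseteq> \<Union>(C ` (W1 \<times> W2))"
  proof
    fix z assume z: "z \<in> X"
    then obtain E1 where "E1 \<in> W1" "z \<in> E1" using W1(4) by blast
    moreover have "(f^^n) z \<in> X" using funpow_in[OF fX z] .
    then obtain E2 where "E2 \<in> W2" "(f^^n) z \<in> E2" using W2(4) by blast
    ultimately have "C (E1,E2) \<in> C ` (W1 \<times> W2)" "z \<in> C (E1,E2)" unfolding C_def by auto
    thus "z \<in> \<Union>(C ` (W1 \<times> W2))" by blast
  qed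
  ultimately have "cover_num X (?J (n+m)) \<le> card (C ` (W1 \<times> W2))" by (rule cover_num_le)
  also have "\<dots> \<le> card (W1 \<times> W2)" by (rule card_image_le) (simp add: W1(2) W2(2))
  also have "\<dots> = card W1 * card W2" by (simp add: card_cartesian_product)
  finally show ?thesis using W1(3) W2(3) by simp
qed



lemma chain_concat:
  assumes c: "is_chain f S \<delta> k c" and d: "is_chain f S \<delta> l d" and ck: "c k = d 0"
  shows "is_chain f S \<delta> (k+l) (\<lambda>i. if i \<le> k then c i else d (i-k))"
  unfolding is_chain_def
proof (intro conjI allI impI)
  show "1 \<le> k + l" using c unfolding is_chain_def by simp
next
  fix i assume i: "i \<le> k + l"
  show "(if i \<le> k then c i else d (i-k)) \<in> S"
    using c d i unfolding is_chain_def by auto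
next
  fix i assume i: "i < k + l"
  show "dist (f (if i \<le> k then c i else d (i - k))) (if Suc i \<le> k then c (Suc i) else d (Suc i - k)) \<le> \<delta>"
  proof (cases "Suc i \<le> k")
    case True then show ?thesis using c unfolding is_chain_def by auto
  next
    case False
    show ?thesis
    proof (cases "i = k")
      case True
      then have "Suc i - k = Suc 0" by simp
      then show ?thesis using True False d ck i unfolding is_chain_def by auto
    next
      case False2: False
      then have "i - k < l" "Suc i - k = Suc (i - k)" "\<not> i \<le> k" using False i by auto
      then show ?thesis using False d unfolding is_chain_def by auto
    qed
  qed
qed

lemma orbit_exists:
  assumes sh: "has_shadowing f (chain_recurrent_set f X)" and eq: "chain_equiv f X x y" and e: "\<epsilon> > 0"
  shows "\<exists>L>0. \<forall>w::nat\<Rightarrow>bool. \<exists>z\<in>X. \<forall>j. dist (if w j then y else x) ((f^^(j*L)) z) < \<epsilon>"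
proof -
  define CR where "CR = chain_recurrent_set f X"
  have CRX: "CR \<subseteq> X" unfolding CR_def chain_recurrent_set_def by auto
  have sh1: "\<exists>\<delta>>0. \<forall>ys :: nat \<Rightarrow> 'a. (\<forall>i. ys i \<in> CR) \<and> (\<forall>i. dist (f (ys i)) (ys (Suc i)) \<le> \<delta>) \<longrightarrow>
      (\<exists>z\<in>CR. \<forall>i. dist ((f ^^ i) z) (ys i) \<le> \<epsilon>/2)"
    using sh[unfolded has_shadowing_def CR_def[symmetric], rule_format, OF half_gt_zero[OF e]] .
  then obtain \<delta> where dd: "\<delta> > 0 \<and> (\<forall>ys :: nat \<Rightarrow> 'a. (\<forall>i. ys i \<in> CR) \<and> (\<forall>i. dist (f (ys i)) (ys (Suc i)) \<le> \<delta>) \<longrightarrow>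
      (\<exists>z\<in>CR. \<forall>i. dist ((f ^^ i) z) (ys i) \<le> \<epsilon>/2))"
    by (elim exE) (rule that)
  have d: "\<delta> > 0" using dd by (rule conjunct1)
  have shd: "\<And>ys. \<forall>i. ys i \<in> CR \<Longrightarrow> \<forall>i. dist (f (ys i)) (ys (Suc i)) \<le> \<delta> \<Longrightarrow>
      (\<exists>z\<in>CR. \<forall>i. dist ((f ^^ i) z) (ys i) \<le> \<epsilon>/2)"
    using conjunct2[OF dd] by blast
  have eq1: "\<exists>m::nat. m > 0 \<and> (\<exists>N::nat. N > 0 \<and> (\<forall>n\<ge>N.
        (\<exists>c. is_chain f CR \<delta> (m * n) c \<and> c 0 = x \<and> c (m * n) = y) \<and>
        (\<exists>c. is_chain f CR \<delta> (m * n) c \<and> c 0 = y \<and> c (m * n) = x)))"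
    using eq[unfolded chain_equiv_def CR_def[symmetric]] d by (elim conjE) (erule allE, erule mp)
  then obtain m N where mN: "m > 0" "N > 0" and H0: "\<forall>n\<ge>N.
        (\<exists>c. is_chain f CR \<delta> (m * n) c \<and> c 0 = x \<and> c (m * n) = y) \<and>
        (\<exists>c. is_chain f CR \<delta> (m * n) c \<and> c 0 = y \<and> c (m * n) = x)"
    by (elim exE conjE) (rule that)
  have H: "\<And>n. n \<ge> N \<Longrightarrow>
        (\<exists>c. is_chain f CR \<delta> (m * n) c \<and> c 0 = x \<and> c (m * n) = y) \<and>
        (\<exists>c. is_chain f CR \<delta> (m * n) c \<and> c 0 = y \<and> c (m * n) = x)" using H0 by blast
  obtain c1 where c1: "is_chain f CR \<delta> (m * N) c1" "c1 0 = x" "c1 (m*N) = y" using H[of N] by auto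
  obtain c2 where c2: "is_chain f CR \<delta> (m * N) c2" "c2 0 = y" "c2 (m*N) = x" using H[of N] by auto
  obtain c3 where c3: "is_chain f CR \<delta> (m * (2*N)) c3" "c3 0 = x" "c3 (m*(2*N)) = y" using H[of "2*N"] by auto
  obtain c4 where c4: "is_chain f CR \<delta> (m * (2*N)) c4" "c4 0 = y" "c4 (m*(2*N)) = x" using H[of "2*N"] by auto
  define L where "L = m * (2*N)"
  have LL: "L = m*N + m*N" unfolding L_def by simp
  have Lpos: "L > 0" unfolding L_def using mN by simp
  have mNpos: "m*N > 0" using mN by simp
  define pt where "pt u = (if u then y else x)" for u :: bool
  have blk: "\<exists>c. is_chain f CR \<delta> L c \<and> c 0 = pt u \<and> c L = pt v" for u v
  proof (cases u; cases v)
    assume "u" "v"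
    have "is_chain f CR \<delta> L (\<lambda>i. if i \<le> m*N then c2 i else c1 (i - m*N))"
      unfolding LL by (rule chain_concat[OF c2(1) c1(1)]) (simp add: c1 c2)
    moreover have "\<not> L \<le> m*N" using LL mNpos by simp
    ultimately show ?thesis using \<open>u\<close> \<open>v\<close> c1 c2 LL unfolding pt_def by (intro exI) auto
  next
    assume "u" "\<not> v"
    then show ?thesis using c4 unfolding pt_def L_def by auto
  next
    assume "\<not> u" "v"
    then show ?thesis using c3 unfolding pt_def L_def by auto
  next
    assume "\<not> u" "\<not> v"
    have "is_chain f CR \<delta> L (\<lambda>i. if i \<le> m*N then c1 i else c2 (i - m*N))"
      unfolding LL by (rule chain_concat[OF c1(1) c2(1)]) (simp add: c1 c2)
    moreover have "\<not> L \<le> m*N" using LL mNpos by simp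
    ultimately show ?thesis using \<open>\<not> u\<close> \<open>\<not> v\<close> c1 c2 LL unfolding pt_def by (intro exI) auto
  qed
  then obtain B where B: "\<And>u v. is_chain f CR \<delta> L (B u v) \<and> B u v 0 = pt u \<and> B u v L = pt v"
    by metis
  have "\<forall>w::nat\<Rightarrow>bool. \<exists>z\<in>X. \<forall>j. dist (pt (w j)) ((f^^(j*L)) z) < \<epsilon>"
  proof
    fix w :: "nat \<Rightarrow> bool"
    define p where "p t = B (w (t div L)) (w (Suc (t div L))) (t mod L)" for t
    have pjr: "p (j*L + r) = B (w j) (w (Suc j)) r" if "r < L" for j r
      unfolding p_def using that by simp
    have "p t \<in> CR" for t
    proof -
      have "t mod L \<le> L" using Lpos by simp
      then show ?thesis unfolding p_def using B unfolding is_chain_def by blast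
    qed
    moreover have "dist (f (p t)) (p (Suc t)) \<le> \<delta>" for t
    proof -
      define j where "j = t div L"
      define r where "r = t mod L"
      have t: "t = j*L + r" unfolding j_def r_def by simp
      have rL: "r < L" unfolding r_def using Lpos by simp
      have ch: "dist (f (B (w j) (w (Suc j)) r)) (B (w j) (w (Suc j)) (Suc r)) \<le> \<delta>"
        using B[of "w j" "w (Suc j)"] rL unfolding is_chain_def by blast
      show ?thesis
      proof (cases "Suc r < L")
        case True
        have "Suc t = j*L + Suc r" using t by simp
        then show ?thesis using ch pjr[OF rL] pjr[OF True] t by simp
      next
        case False
        then have r1: "Suc r = L" using rL by simp
        have "Suc t = Suc j * L + 0" using t r1 by simp
        then have "p (Suc t) = B (w (Suc j)) (w (Suc (Suc j))) 0" using pjr[OF Lpos, of "Suc j"] by (simp only:)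
        also have "\<dots> = pt (w (Suc j))" using B by blast
        also have "\<dots> = B (w j) (w (Suc j)) (Suc r)" using B r1 by metis
        finally show ?thesis using ch pjr[OF rL] t by simp
      qed
    qed
    ultimately have "\<exists>z\<in>CR. \<forall>i. dist ((f ^^ i) z) (p i) \<le> \<epsilon>/2"
      by (intro shd allI)
    then obtain z where z: "z \<in> CR" "\<And>i. dist ((f ^^ i) z) (p i) \<le> \<epsilon>/2"
      by blast
    show "\<exists>z\<in>X. \<forall>j. dist (pt (w j)) ((f^^(j*L)) z) < \<epsilon>"
    proof (intro bexI allI)
      fix j
      have "p (j*L) = pt (w j)" using pjr[OF Lpos, of j] B by simp
      then have "dist ((f ^^ (j*L)) z) (pt (w j)) \<le> \<epsilon>/2" using z(2)[of "j*L"] by simp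
      then show "dist (pt (w j)) ((f^^(j*L)) z) < \<epsilon>" using e by (simp add: dist_commute)
    next
      show "z \<in> X" using z CRX by blast
    qed
  qed
  then show ?thesis using Lpos unfolding pt_def by blast
qed



lemma sep_claim:
  assumes fX: "f ` X \<subseteq> X" and E: "E \<in> join_cover f X {P,Q} n" and z1: "z1 \<in> E" and z2: "z2 \<in> E"
    and t: "t < n"
    and hP: "\<forall>z\<in>X. dist x z < \<epsilon> \<longrightarrow> z \<notin> P" and hQ: "\<forall>z\<in>X. dist y z < \<epsilon> \<longrightarrow> z \<notin> Q"
    and d1: "dist y ((f^^t) z1) < \<epsilon>" and d2: "dist x ((f^^t) z2) < \<epsilon>"
  shows False
proof -
  obtain s where s: "\<forall>i<n. s i \<in> {P,Q}" "E = {z\<in>X. \<forall>i<n. (f^^i) z \<in> s i}"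
    using join_cover_memD[OF E] by (elim exE conjE) (rule that; assumption)
  have a1: "z1 \<in> X" "(f^^t) z1 \<in> s t" using z1 t unfolding s(2) by auto
  have a2: "z2 \<in> X" "(f^^t) z2 \<in> s t" using z2 t unfolding s(2) by auto
  have b1: "(f^^t) z1 \<in> X" using funpow_in[OF fX a1(1)] .
  have b2: "(f^^t) z2 \<in> X" using funpow_in[OF fX a2(1)] .
  have "s t = P \<or> s t = Q" using s(1) t by blast
  then show False
  proof
    assume "s t = P" then show False using hP b2 d2 a2(2) by blast
  next
    assume "s t = Q" then show False using hQ b1 d1 a1(2) by blast
  qed
qed

lemma lower:
  assumes fX: "f ` X \<subseteq> X"
    and orb: "\<forall>w::nat\<Rightarrow>bool. \<exists>z\<in>X. \<forall>j. dist (if w j then y else x) ((f^^(j*L)) z) < \<epsilon>"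
    and hP: "\<forall>z\<in>X. dist x z < \<epsilon> \<longrightarrow> z \<notin> P" and hQ: "\<forall>z\<in>X. dist y z < \<epsilon> \<longrightarrow> z \<notin> Q"
    and kn: "\<forall>j<k. j*L < n"
    and W: "W \<subseteq> join_cover f X {P,Q} n" "finite W" "X \<subseteq> \<Union>W"
  shows "2^k \<le> card W"
proof -
  obtain zf where zf: "\<And>w. zf w \<in> X" "\<And>w j. dist (if w j then y else x) ((f^^(j*L)) (zf w)) < \<epsilon>"
    using orb by metis
  define g where "g S = zf (\<lambda>j. j \<in> S)" for S :: "nat set"
  have "\<exists>E\<in>W. g S \<in> E" for S using W(3) zf(1) unfolding g_def by blast
  then obtain Ef where Ef: "\<And>S. Ef S \<in> W" "\<And>S. g S \<in> Ef S" by metis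
  have ne: "Ef S \<noteq> Ef T" if "j \<in> S" "j \<notin> T" "j < k" for S T j
  proof
    assume eq: "Ef S = Ef T"
    have "dist y ((f^^(j*L)) (g S)) < \<epsilon>" using zf(2)[of "\<lambda>j. j \<in> S" j] that unfolding g_def by simp
    moreover have "dist x ((f^^(j*L)) (g T)) < \<epsilon>" using zf(2)[of "\<lambda>j. j \<in> T" j] that unfolding g_def by simp
    moreover have "g T \<in> Ef S" using Ef(2)[of T] eq by simp
    ultimately show False
      using sep_claim[OF fX _ Ef(2)[of S] _ _ hP hQ] W(1) Ef(1)[of S] kn that by blast
  qed
  have "inj_on Ef (Pow {..<k})"
  proof (rule inj_onI)
    fix S T assume S: "S \<in> Pow {..<k}" and T: "T \<in> Pow {..<k}" and eq: "Ef S = Ef T"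
    show "S = T"
    proof (rule ccontr)
      assume "S \<noteq> T"
      then obtain j where "j \<in> S \<and> j \<notin> T \<or> j \<in> T \<and> j \<notin> S" by blast
      moreover have "j \<in> S \<Longrightarrow> j < k" "j \<in> T \<Longrightarrow> j < k" using S T by auto
      ultimately show False using ne eq by metis
    qed
  qed
  moreover have "Ef ` Pow {..<k} \<subseteq> W" using Ef(1) by blast
  ultimately have "card (Pow {..<k}) \<le> card W" using W(2) by (rule card_inj_on_le)
  thus ?thesis by (simp add: card_Pow)
qed

lemma entropy_lb:
  assumes fX: "f ` X \<subseteq> X" and xX: "x \<in> X" and L: "L > 0"
    and orb: "\<forall>w::nat\<Rightarrow>bool. \<exists>z\<in>X. \<forall>j. dist (if w j then y else x) ((f^^(j*L)) z) < \<epsilon>"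
    and hP: "\<forall>z\<in>X. dist x z < \<epsilon> \<longrightarrow> z \<notin> P" and hQ: "\<forall>z\<in>X. dist y z < \<epsilon> \<longrightarrow> z \<notin> Q"
    and cov: "X \<subseteq> P \<union> Q"
  shows "ln 2 / real L \<le> cover_entropy f X {P,Q}"
proof -
  define Nn where "Nn n = cover_num X (join_cover f X {P,Q} n)" for n
  have fin: "finite (join_cover f X {P,Q} k)" for k by (rule join_finite) simp
  have cv: "X \<subseteq> \<Union>(join_cover f X {P,Q} k)" for k by (rule join_covers[OF fX cov])
  have N1: "Nn n \<ge> 1" for n unfolding Nn_def using cover_num_pos[OF fin cv] xX by blast
  have Npos: "real (Nn n) > 0" for n using N1[of n] by simp
  have sub: "ln (real (Nn (m+n))) \<le> ln (real (Nn m)) + ln (real (Nn n))" for m n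
  proof -
    have "Nn (m+n) \<le> Nn m * Nn n" unfolding Nn_def by (rule cover_num_submult[OF fX cov])
    hence "real (Nn (m+n)) \<le> real (Nn m) * real (Nn n)" by (metis of_nat_le_iff of_nat_mult)
    hence "ln (real (Nn (m+n))) \<le> ln (real (Nn m) * real (Nn n))" using Npos by simp
    thus ?thesis using Npos by (simp add: ln_mult)
  qed
  have nn: "ln (real (Nn n)) \<ge> 0" for n using N1[of n] by simp
  have conv: "convergent (\<lambda>n. ln (real (Nn n)) / real n)"
    by (rule fekete[of "\<lambda>n. ln (real (Nn n))"]) (use sub nn in auto)
  have low: "ln 2 / real L \<le> ln (real (Nn n)) / real n" if n: "n \<ge> 1" for n
  proof -
    define k where "k = (n-1) div L + 1"
    have kn: "\<forall>j<k. j*L < n"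
    proof (intro allI impI)
      fix j assume "j < k"
      hence "j \<le> (n-1) div L" unfolding k_def by simp
      hence "j*L \<le> ((n-1) div L) * L" by simp
      also have "\<dots> \<le> n - 1" by simp
      finally show "j*L < n" using n by simp
    qed
    have nk: "n \<le> k * L"
    proof -
      have "n - 1 < ((n-1) div L + 1) * L" using L
        by (metis add.commute div_mult_mod_eq mod_less_divisor mult_Suc plus_1_eq_Suc add_less_cancel_left)
      thus ?thesis unfolding k_def using n by simp
    qed
    obtain W where W: "W \<subseteq> join_cover f X {P,Q} n" "finite W" "card W = Nn n" "X \<subseteq> \<Union>W"
      using cover_num_ex[OF fin cv] unfolding Nn_def by meson
    have "2^k \<le> Nn n" using lower[OF fX orb hP hQ kn W(1,2,4)] W(3) by simp
    hence "(2::real)^k \<le> real (Nn n)" by (metis of_nat_le_iff of_nat_numeral of_nat_power)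
    hence "ln ((2::real)^k) \<le> ln (real (Nn n))" using Npos[of n] by (subst ln_le_cancel_iff) auto
    hence kl: "real k * ln 2 \<le> ln (real (Nn n))" by (simp add: ln_realpow)
    have "ln 2 / real L \<le> real k * ln 2 / real n"
    proof -
      have "real n \<le> real k * real L" using nk by (metis of_nat_le_iff of_nat_mult)
      hence "ln 2 * real n \<le> real k * ln 2 * real L" by (simp add: mult.commute mult.left_commute)
      thus ?thesis using L n by (simp add: divide_simps)
    qed
    also have "\<dots> \<le> ln (real (Nn n)) / real n" using kl n by (simp add: divide_right_mono)
    finally show ?thesis .
  qed
  have "(\<lambda>n. ln (real (Nn n)) / real n) \<longlonglongrightarrow> lim (\<lambda>n. ln (real (Nn n)) / real n)"
    using conv by (simp add: convergent_LIMSEQ_iff)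
  hence "ln 2 / real L \<le> lim (\<lambda>n. ln (real (Nn n)) / real n)"
    by (rule LIMSEQ_le_const) (use low in auto)
  thus ?thesis unfolding cover_entropy_def Nn_def .
qed


theorem mainTheorem8:
  fixes f :: "'a::metric_space \<Rightarrow> 'a" and X :: "'a set" and x y :: 'a
  assumes "compact X" and "continuous_on X f" and "f ` X \<subseteq> X"
    and "has_shadowing f (chain_recurrent_set f X)"
    and "x \<in> chain_recurrent_set f X" and "y \<in> chain_recurrent_set f X"
    and "x \<noteq> y" and "chain_equiv f X x y"
  shows "(\<forall>\<epsilon>. 0 < \<epsilon> \<and> \<epsilon> < dist x y / 2 \<longrightarrow>
           (\<exists>a::nat. a > 0 \<and>
              cover_entropy f X {X - ball x \<epsilon>, X - ball y \<epsilon>} \<ge> ln 2 / real a \<and>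
              cover_entropy f X {X - ball x \<epsilon>, X - ball y \<epsilon>} > 0))
         \<and> entropy_pair f X x y"
proof -
  note fX = assms(3)
  have xX: "x \<in> X" and yX: "y \<in> X" using assms(5,6) unfolding chain_recurrent_set_def by auto
  have key: "\<exists>a::nat. a > 0 \<and> ln 2 / real a \<le> cover_entropy f X {P,Q} \<and> cover_entropy f X {P,Q} > 0"
    if e: "\<epsilon> > 0" and hP: "\<forall>z\<in>X. dist x z < \<epsilon> \<longrightarrow> z \<notin> P"
      and hQ: "\<forall>z\<in>X. dist y z < \<epsilon> \<longrightarrow> z \<notin> Q" and cov: "X \<subseteq> P \<union> Q" for \<epsilon> P Q
  proof -
    obtain L :: nat where L: "L > 0"
      and orb: "\<forall>w::nat\<Rightarrow>bool. \<exists>z\<in>X. \<forall>j. dist (if w j then y else x) ((f^^(j*L)) z) < \<epsilon>"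
      using orbit_exists[OF assms(4) assms(8) e] by blast
    have lb: "ln 2 / real L \<le> cover_entropy f X {P,Q}" by (rule entropy_lb[OF fX xX L orb hP hQ cov])
    have pos: "ln 2 / real L > 0" using L by simp
    have "cover_entropy f X {P,Q} > 0" using lb pos by linarith
    then show ?thesis using L lb by (intro exI[of _ L]) auto
  qed
  have part1: "\<forall>\<epsilon>. 0 < \<epsilon> \<and> \<epsilon> < dist x y / 2 \<longrightarrow>
           (\<exists>a::nat. a > 0 \<and>
              cover_entropy f X {X - ball x \<epsilon>, X - ball y \<epsilon>} \<ge> ln 2 / real a \<and>
              cover_entropy f X {X - ball x \<epsilon>, X - ball y \<epsilon>} > 0)"
  proof (intro allI impI)
    fix \<epsilon> :: real assume e: "0 < \<epsilon> \<and> \<epsilon> < dist x y / 2"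
    have cov: "X \<subseteq> (X - ball x \<epsilon>) \<union> (X - ball y \<epsilon>)"
    proof
      fix z assume z: "z \<in> X"
      show "z \<in> (X - ball x \<epsilon>) \<union> (X - ball y \<epsilon>)"
      proof (rule ccontr)
        assume "z \<notin> (X - ball x \<epsilon>) \<union> (X - ball y \<epsilon>)"
        hence "dist x z < \<epsilon>" "dist y z < \<epsilon>" using z by auto
        moreover have "dist x y \<le> dist x z + dist y z" by (metis dist_commute dist_triangle)
        ultimately show False using e by linarith
      qed
    qed
    show "\<exists>a::nat. a > 0 \<and>
              cover_entropy f X {X - ball x \<epsilon>, X - ball y \<epsilon>} \<ge> ln 2 / real a \<and>
              cover_entropy f X {X - ball x \<epsilon>, X - ball y \<epsilon>} > 0"
      using key[of \<epsilon> "X - ball x \<epsilon>" "X - ball y \<epsilon>"] e cov by auto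
  qed
  have part2: "entropy_pair f X x y"
    unfolding entropy_pair_def
  proof (intro conjI allI impI)
    fix A B assume H: "closed A \<and> closed B \<and> A \<subseteq> X \<and> B \<subseteq> X \<and> A \<inter> B = {} \<and>
        (\<exists>U. open U \<and> x \<in> U \<and> U \<inter> X \<subseteq> A) \<and> (\<exists>V. open V \<and> y \<in> V \<and> V \<inter> X \<subseteq> B)"
    then obtain U V where U: "open U" "x \<in> U" "U \<inter> X \<subseteq> A" and V: "open V" "y \<in> V" "V \<inter> X \<subseteq> B"
      by blast
    obtain e1 where e1: "e1 > 0" "ball x e1 \<subseteq> U" using U open_contains_ball by blast
    obtain e2 where e2: "e2 > 0" "ball y e2 \<subseteq> V" using V open_contains_ball by blast
    define \<epsilon> where "\<epsilon> = min e1 e2"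
    have e: "\<epsilon> > 0" unfolding \<epsilon>_def using e1 e2 by simp
    have hP: "\<forall>z\<in>X. dist x z < \<epsilon> \<longrightarrow> z \<notin> X - A"
      using e1 U(3) unfolding \<epsilon>_def by (auto simp: subset_iff)
    have hQ: "\<forall>z\<in>X. dist y z < \<epsilon> \<longrightarrow> z \<notin> X - B"
      using e2 V(3) unfolding \<epsilon>_def by (auto simp: subset_iff)
    have cov: "X \<subseteq> (X - A) \<union> (X - B)" using H by blast
    show "cover_entropy f X {X - A, X - B} > 0" using key[OF e hP hQ cov] by blast
  qed (use xX yX assms(7) in auto)
  show ?thesis using part1 part2 by blast
qed

end
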